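(* Let $\gamma$ be an even probability density on $\mathbb{R}$ positive in a neighbourhood of the origin. The sub-spherical family $\mathcal{P}^n_\gamma$ is closed with respect to taking convex combinations of its members. Moreover, if $\gamma_1,\gamma_2$ are two such densities, then $\mathcal{P}^n_{\gamma_1}\cup\mathcal{P}^n_{\gamma_2}\subset\mathcal{P}^n_\gamma$, where $\gamma$ is defined by $$\gamma(-s)=\gamma(s)=-\frac{d}{ds}\max_{i=1,2}\int_s^\infty\gamma_i(r)\,dr,\quad s\ge 0.$$
   Context: For an even probability density $\gamma$ on $\mathbb{R}$ positive in a neighbourhood of $0$, set $P_\gamma(\delta)=\int_\delta^\infty\gamma(s)\,ds$. The sub-spherical family $\mathcal{P}^n_\gamma$ is the set of all probability densities $p$ on $\mathbb{R}^n$ (w.r.t. Lebesgue measure) such that $p$ is even and for every unit vector $e\in\mathbb{R}^n$ and every $\delta\ge 0$, $\int_{\{\xi:e^T\xi\ge\delta\}}p(\xi)\,d\xi\le P_\gamma(\delta)$. *)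

theory Defs
  imports "HOL-Analysis.Analysis"
begin

text \<open>An even probability density on the real line, positive in a neighbourhood of 0.\<close>
definition admissible_gamma :: "(real \<Rightarrow> real) \<Rightarrow> bool" where
  "admissible_gamma \<gamma> \<longleftrightarrow>
     (\<forall>s. 0 \<le> \<gamma> s) \<and> \<gamma> \<in> borel_measurable lebesgue \<and>
     (\<integral>\<^sup>+ s. ennreal (\<gamma> s) \<partial>lebesgue) = 1 \<and>
     (\<forall>s. \<gamma> (- s) = \<gamma> s) \<and>
     (\<exists>\<epsilon>>0. \<forall>s. \<bar>s\<bar> < \<epsilon> \<longrightarrow> 0 < \<gamma> s)"

text \<open>The tail function P_gamma(delta) = integral of gamma over [delta, infinity).\<close>
definition tailP :: "(real \<Rightarrow> real) \<Rightarrow> real \<Rightarrow> ennreal" where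
  "tailP \<gamma> \<delta> = (\<integral>\<^sup>+ s \<in> {\<delta>..}. ennreal (\<gamma> s) \<partial>lebesgue)"

text \<open>Probability density on R^n w.r.t. Lebesgue measure.\<close>
definition prob_density :: "('a::euclidean_space \<Rightarrow> real) \<Rightarrow> bool" where
  "prob_density p \<longleftrightarrow>
     (\<forall>x. 0 \<le> p x) \<and> p \<in> borel_measurable lebesgue \<and>
     (\<integral>\<^sup>+ x. ennreal (p x) \<partial>lebesgue) = 1"

text \<open>The sub-spherical family P^n_gamma.\<close>
definition subspherical :: "(real \<Rightarrow> real) \<Rightarrow> ('a::euclidean_space \<Rightarrow> real) set" where
  "subspherical \<gamma> = {p. prob_density p \<and> (\<forall>x. p (- x) = p x) \<and>
      (\<forall>e \<delta>. norm e = 1 \<longrightarrow> 0 \<le> \<delta> \<longrightarrow>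
         (\<integral>\<^sup>+ \<xi> \<in> {\<xi>. \<delta> \<le> e \<bullet> \<xi>}. ennreal (p \<xi>) \<partial>lebesgue) \<le> tailP \<gamma> \<delta>)}"

end

theory Submission
  imports Defs
begin

lemma measure_diff_image_real:
  fixes g :: "real \<Rightarrow> real"
  assumes S: "S \<in> sets lebesgue"
    and der: "\<And>x. x \<in> S \<Longrightarrow> (g has_real_derivative g' x) (at x within S)"
    and int: "(\<lambda>x. \<bar>g' x\<bar>) integrable_on S"
  shows "g ` S \<in> lmeasurable \<and> measure lebesgue (g ` S) \<le> integral S (\<lambda>x. \<bar>g' x\<bar>)"
proof -
  let ?lift = "vec :: real \<Rightarrow> real^1"
  let ?drop = "(\<lambda>x::real^1. x $ 1)"
  have S': "?lift ` S \<in> sets lebesgue"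
    by (auto intro: differentiable_image_in_sets_lebesgue [OF S] differentiable_vec)
  have "((\<lambda>x. vec (g (x $ 1))) has_derivative (*\<^sub>R) (g' z)) (at (vec z) within ?lift ` S)"
    if "z \<in> S" for z
    using der [OF that]
    by (simp add: has_real_derivative_iff_has_vector_derivative has_vector_derivative_def has_derivative_vector_1)
  then have der': "\<And>x. x \<in> ?lift ` S \<Longrightarrow>
        (?lift \<circ> g \<circ> ?drop has_derivative (*\<^sub>R) (g' (?drop x))) (at x within ?lift ` S)"
    by (auto simp: o_def)
  have det: "det (matrix ((*\<^sub>R) c) :: real^1^1) = c" for c :: real
    by (simp add: det_1 matrix_def)
  have dropS: "?drop ` ?lift ` S = S" by (auto simp: image_image)
  have int': "(\<lambda>x. \<bar>det (matrix ((*\<^sub>R) (g' (?drop x))) :: real^1^1)\<bar>) integrable_on ?lift ` S"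
    unfolding det
  proof -
    obtain I where I: "((\<lambda>x. \<bar>g' x\<bar>) has_integral I) S" using int by (auto simp: integrable_on_def)
    have "(((\<lambda>x::real^1. \<bar>g' (x$1)\<bar>) \<circ> vec) has_integral I) (?drop ` ?lift ` S)"
      using I dropS by (simp add: o_def)
    then show "(\<lambda>x::real^1. \<bar>g' (x$1)\<bar>) integrable_on ?lift ` S"
      using has_integral_vec1_D by blast
  qed
  have "?drop ` (?lift \<circ> g \<circ> ?drop) ` ?lift ` S = g ` S" by (auto simp: image_image)
  note m = measurable_differentiable_image[OF S' der' int'] measure_differentiable_image[OF S' der' int']
  have imgeq: "(?lift \<circ> g \<circ> ?drop) ` ?lift ` S = ?lift ` (g ` S)" by (auto simp: image_image)
  have dT: "?drop ` ?lift ` (g ` S) = g ` S" by (auto simp: image_image)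
  have L: "?lift ` (g ` S) \<in> lmeasurable" using m(1) imgeq by simp
  have HH: "((\<lambda>x::real^1. 1::real) has_integral measure lebesgue (?lift ` (g ` S))) (?lift ` (g ` S))"
    unfolding lmeasure_integral[OF L] using L[unfolded lmeasurable_iff_integrable_on] by (simp add: has_integral_integral)
  have "(((\<lambda>x::real^1. 1::real) \<circ> vec) has_integral measure lebesgue (?lift ` (g ` S))) (g ` S)"
    using has_integral_vec1_I[OF HH] unfolding dT by blast
  then have H: "((\<lambda>x. 1::real) has_integral measure lebesgue (?lift ` (g ` S))) (g ` S)"
    by (simp add: o_def)
  then have gS: "g ` S \<in> lmeasurable" using lmeasurable_iff_integrable_on by blast
  have "measure lebesgue (g ` S) = measure lebesgue (?lift ` (g ` S))"
    using H gS by (simp add: lmeasure_integral integral_unique)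
  moreover have "integral (?lift ` S) (\<lambda>x. \<bar>det (matrix ((*\<^sub>R) (g' (?drop x))) :: real^1^1)\<bar>) = integral S (\<lambda>x. \<bar>g' x\<bar>)"
    unfolding det integral_vec1_eq[of "?lift ` S"] dropS by (simp add: o_def)
  ultimately show ?thesis using m(2) imgeq gS by simp
qed

lemma emeasure_UN_countable_le:
  assumes I: "countable I" and X: "\<And>i. i \<in> I \<Longrightarrow> X i \<in> sets M"
  shows "emeasure M (\<Union>(X ` I)) \<le> (\<integral>\<^sup>+i. emeasure M (X i) \<partial>count_space I)"
proof -
  have U: "\<Union>(X ` I) \<in> sets M" using I X by (intro sets.countable_UN') auto
  have "emeasure M (\<Union>(X ` I)) = (\<integral>\<^sup>+x. indicator (\<Union>(X ` I)) x \<partial>M)"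
    using U by simp
  also have "\<dots> \<le> (\<integral>\<^sup>+x. \<integral>\<^sup>+i. indicator (X i) x \<partial>count_space I \<partial>M)"
  proof (rule nn_integral_mono)
    fix x
    show "indicator (\<Union>(X ` I)) x \<le> (\<integral>\<^sup>+i. indicator (X i) x \<partial>count_space I)"
    proof (cases "x \<in> \<Union>(X ` I)")
      case True
      then obtain j where j: "j \<in> I" "x \<in> X j" by auto
      have "(1::ennreal) = (\<integral>\<^sup>+i. 1 * indicator {j} i \<partial>count_space I)"
        using j by (subst nn_integral_cmult_indicator) auto
      also have "\<dots> \<le> (\<integral>\<^sup>+i. indicator (X i) x \<partial>count_space I)"
        using j by (intro nn_integral_mono) (auto split: split_indicator)
      finally show ?thesis using True by simp
    qed simp
  qed
  also have "\<dots> = (\<integral>\<^sup>+i. \<integral>\<^sup>+x. indicator (X i) x \<partial>M \<partial>count_space I)"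
    using I X by (intro nn_integral_count_space_nn_integral) auto
  also have "\<dots> = (\<integral>\<^sup>+i. emeasure M (X i) \<partial>count_space I)"
    using X by (intro nn_integral_cong) auto
  finally show ?thesis .
qed

lemma lusinN:
  fixes g \<rho> :: "real \<Rightarrow> real"
  assumes \<rho>0: "\<And>x. 0 \<le> \<rho> x" and \<rho>m: "\<rho> \<in> borel_measurable lebesgue"
    and \<rho>fin: "(\<integral>\<^sup>+x. ennreal (\<rho> x) \<partial>lebesgue) < \<infinity>"
    and bd: "\<And>x y. x \<le> y \<Longrightarrow> ennreal \<bar>g y - g x\<bar> \<le> (\<integral>\<^sup>+t\<in>{x..y}. ennreal (\<rho> t) \<partial>lebesgue)"
    and N: "N \<in> null_sets lebesgue" and Nab: "N \<subseteq> {a..b}"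
  shows "g ` N \<in> null_sets lebesgue"
proof -
  define \<nu> where "\<nu> = density lebesgue (\<lambda>x. ennreal (\<rho> x))"
  have s\<nu>[simp]: "sets \<nu> = sets lebesgue" by (simp add: \<nu>_def)
  have \<nu>A: "emeasure \<nu> A = (\<integral>\<^sup>+t\<in>A. ennreal (\<rho> t) \<partial>lebesgue)" if "A \<in> sets lebesgue" for A
    using that \<rho>m by (simp add: \<nu>_def emeasure_density)
  have \<nu>fin: "emeasure \<nu> A < top" if "A \<in> sets lebesgue" for A
  proof -
    have "emeasure \<nu> A \<le> (\<integral>\<^sup>+x. ennreal (\<rho> x) \<partial>lebesgue)"
      unfolding \<nu>A[OF that] by (intro nn_integral_mono) (auto split: split_indicator)
    then show ?thesis using \<rho>fin by (simp add: le_less_trans)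
  qed
  have \<nu>null: "emeasure \<nu> A = 0" if "A \<in> null_sets lebesgue" for A
  proof -
    have "A \<in> sets lebesgue" using that by auto
    then show ?thesis by (simp add: \<nu>A nn_integral_null_set[OF that])
  qed
  have Nm: "N \<in> lmeasurable" using N by (rule fmeasurableI_null_sets)
  have mN: "measure lebesgue N = 0" using N by (simp add: measure_eq_0_null_sets)
  have "\<forall>k::nat. \<exists>D. countable D \<and> (\<forall>K\<in>D. \<exists>c d. c \<le> d \<and> K = {c..d}) \<and>
      pairwise (\<lambda>A B. interior A \<inter> interior B = {}) D \<and> N \<subseteq> \<Union>D \<and> \<Union>D \<in> lmeasurable \<and>
      measure lebesgue (\<Union>D) \<le> (1/2)^k"
  proof
    fix k :: nat
    have "(0::real) < (1/2)^k" by simp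
    have Nsub: "N \<subseteq> cbox a b" using Nab by simp
    obtain D where D: "countable D"
        "\<And>K. K \<in> D \<Longrightarrow> K \<subseteq> cbox a b \<and> K \<noteq> {} \<and> (\<exists>c d. K = cbox c d)"
        "pairwise (\<lambda>A B. interior A \<inter> interior B = {}) D"
        "\<And>u v. cbox u v \<in> D \<Longrightarrow> \<exists>n. \<forall>i \<in> Basis. v \<bullet> i - u \<bullet> i = (b \<bullet> i - a \<bullet> i)/2^n"
        "\<And>K. \<lbrakk>K \<in> D; box a b \<noteq> {}\<rbrakk> \<Longrightarrow> interior K \<noteq> {}"
        "N \<subseteq> \<Union>D" "\<Union>D \<in> lmeasurable" "measure lebesgue (\<Union>D) \<le> measure lebesgue N + (1/2)^k"
      by (rule measurable_outer_intervals_bounded[OF Nm Nsub \<open>0 < (1/2)^k\<close>]) blast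
    have "\<forall>K\<in>D. \<exists>c d. c \<le> d \<and> K = {c..d}"
    proof
      fix K assume "K \<in> D"
      then obtain c d where "K = cbox c d" "K \<noteq> {}" using D(2) by blast
      then show "\<exists>c d. c \<le> d \<and> K = {c..d}" by auto
    qed
    then show "\<exists>D. countable D \<and> (\<forall>K\<in>D. \<exists>c d. c \<le> d \<and> K = {c..d}) \<and>
      pairwise (\<lambda>A B. interior A \<inter> interior B = {}) D \<and> N \<subseteq> \<Union>D \<and> \<Union>D \<in> lmeasurable \<and>
      measure lebesgue (\<Union>D) \<le> (1/2)^k"
      using D mN by (intro exI[of _ D]) auto
  qed
  then obtain D where Dc: "\<And>k. countable (D k)"
    and Dint: "\<And>k K. K \<in> D k \<Longrightarrow> \<exists>c d. c \<le> d \<and> K = {c..d}"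
    and Dpw: "\<And>k. pairwise (\<lambda>A B. interior A \<inter> interior B = {}) (D k)"
    and DN: "\<And>k. N \<subseteq> \<Union>(D k)" and Dm: "\<And>k. \<Union>(D k) \<in> lmeasurable"
    and Dmeas: "\<And>k. measure lebesgue (\<Union>(D k)) \<le> (1/2)^k"
    by metis
  have Ksets: "K \<in> sets lebesgue" if "K \<in> D k" for K k
    using Dint[OF that] by auto
  define U where "U k = \<Union>(D k)" for k
  define V where "V k = (\<Union>j. U (j + k))" for k
  have Usets: "U k \<in> sets lebesgue" for k using Dm by (auto simp: U_def)
  have Vsets: "V k \<in> sets lebesgue" for k using Usets by (auto simp: V_def)
  have UV: "U k \<subseteq> V k" for k unfolding V_def using UN_upper[of 0 UNIV "\<lambda>j. U (j+k)"] by simp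
  have Vdec: "decseq V"
    unfolding decseq_def V_def
  proof (intro allI impI subsetI)
    fix m n x assume "m \<le> n" "x \<in> (\<Union>j. U (j + n))"
    then obtain j where "x \<in> U (j + n)" by auto
    then have "x \<in> U ((j + n - m) + m)" using \<open>m \<le> n\<close> by simp
    then show "x \<in> (\<Union>j. U (j + m))" by blast
  qed
  have Vmeas: "emeasure lebesgue (V k) \<le> ennreal (2 * (1/2)^k)" for k
  proof -
    have "emeasure lebesgue (V k) \<le> (\<Sum>j. emeasure lebesgue (U (j + k)))"
      unfolding V_def by (rule emeasure_subadditive_countably) (use Usets in auto)
    also have "\<dots> \<le> (\<Sum>j. ennreal ((1/2)^(j+k)))"
    proof (intro suminf_le allI)
      fix j
      show "emeasure lebesgue (U (j + k)) \<le> ennreal ((1/2)^(j+k))"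
        using Dmeas[of "j+k"] Dm[of "j+k"] unfolding U_def
        by (simp add: emeasure_eq_measure2 ennreal_leI)
    qed auto
    also have "\<dots> = ennreal (2 * (1/2)^k)"
    proof -
      have "(\<lambda>j. (1/2::real)^(j+k)) sums (2 * (1/2)^k)"
        using sums_mult2[OF geometric_sums[of "1/2::real"], of "(1/2)^k"]
        by (simp add: power_add mult.commute)
      then have "(\<lambda>j. ennreal ((1/2::real)^(j+k))) sums ennreal (2 * (1/2)^k)"
        by (subst sums_ennreal) auto
      then show ?thesis by (simp add: sums_iff)
    qed
    finally show ?thesis .
  qed
  have INTnull: "(\<Inter>k. V k) \<in> null_sets lebesgue"
  proof -
    have Is: "(\<Inter>k. V k) \<in> sets lebesgue" using Vsets by auto
    have IV: "emeasure lebesgue (\<Inter>k. V k) \<le> ennreal (2 * (1/2)^k)" for k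
    proof -
      have "emeasure lebesgue (\<Inter>k. V k) \<le> emeasure lebesgue (V k)"
        by (rule emeasure_mono) (use Vsets in auto)
      then show ?thesis using Vmeas[of k] by (rule order_trans)
    qed
    have "emeasure lebesgue (\<Inter>k. V k) \<le> 0"
    proof (rule ennreal_le_epsilon)
      fix e :: real assume e: "0 < e"
      have "\<exists>n. (1/2::real)^n < e/2"
        by (rule real_arch_pow_inv) (use e in auto)
      then obtain k where k: "(1/2::real)^k < e/2" ..
      have "ennreal (2 * (1/2)^k) \<le> 0 + ennreal e"
        using k by (simp add: ennreal_leI)
      with IV[of k] show "emeasure lebesgue (\<Inter>k. V k) \<le> 0 + ennreal e"
        by (rule order_trans)
    qed
    then show ?thesis using Is by (simp add: null_sets_def)
  qed
  have INF\<nu>: "(INF k. emeasure \<nu> (V k)) = 0"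
  proof -
    have "(INF k. emeasure \<nu> (V k)) = emeasure \<nu> (\<Inter>k. V k)"
      by (rule INF_emeasure_decseq) (use Vsets Vdec \<nu>fin in \<open>auto simp: less_top\<close>)
    also have "\<dots> = 0" using \<nu>null[OF INTnull] .
    finally show ?thesis .
  qed
  define C where "C k = (\<Union>K\<in>D k. cball (g (Inf K)) (enn2real (emeasure \<nu> K)))" for k
  have Csets: "C k \<in> sets lebesgue" for k
    unfolding C_def using Dc by (intro sets.countable_UN') auto
  have gNC: "g ` N \<subseteq> C k" for k
  proof
    fix y assume "y \<in> g ` N"
    then obtain x where x: "x \<in> N" "y = g x" by auto
    then obtain K where K: "K \<in> D k" "x \<in> K" using DN by blast
    then obtain c d where cd: "c \<le> d" "K = {c..d}" using Dint by blast
    have "ennreal \<bar>g x - g c\<bar> \<le> (\<integral>\<^sup>+t\<in>{c..x}. ennreal (\<rho> t) \<partial>lebesgue)"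
      using bd[of c x] K cd by auto
    also have "\<dots> = emeasure \<nu> {c..x}" by (simp add: \<nu>A)
    also have "\<dots> \<le> emeasure \<nu> K" using K cd by (intro emeasure_mono) auto
    finally have le: "ennreal \<bar>g x - g c\<bar> \<le> emeasure \<nu> K" .
    have "enn2real (ennreal \<bar>g x - g c\<bar>) \<le> enn2real (emeasure \<nu> K)"
      using enn2real_mono[OF le \<nu>fin[OF Ksets[OF K(1)]]] .
    then have "\<bar>g x - g c\<bar> \<le> enn2real (emeasure \<nu> K)" by simp
    moreover have "Inf K = c" using cd by simp
    ultimately show "y \<in> C k" unfolding C_def using K x
      by (auto simp: dist_real_def abs_minus_commute intro!: bexI[of _ K])
  qed
  have Cmeas: "emeasure lebesgue (C k) \<le> 2 * emeasure \<nu> (V k)" for k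
  proof -
    have "emeasure lebesgue (C k) \<le> (\<integral>\<^sup>+K. emeasure lebesgue (cball (g (Inf K)) (enn2real (emeasure \<nu> K))) \<partial>count_space (D k))"
      unfolding C_def by (rule emeasure_UN_countable_le) (use Dc in auto)
    also have "\<dots> = (\<integral>\<^sup>+K. 2 * emeasure \<nu> (interior K) \<partial>count_space (D k))"
    proof (rule nn_integral_cong)
      fix K assume "K \<in> space (count_space (D k))"
      then have K: "K \<in> D k" by simp
      then obtain c d where cd: "c \<le> d" "K = {c..d}" using Dint by blast
      have "emeasure \<nu> K \<le> emeasure \<nu> (interior K \<union> {c, d})"
        using cd by (intro emeasure_mono) auto
      also have "\<dots> \<le> emeasure \<nu> (interior K) + emeasure \<nu> {c, d}"
        using cd by (intro emeasure_subadditive) auto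
      also have "emeasure \<nu> {c, d} = 0"
        by (rule \<nu>null) (simp add: countable_imp_null_set_lborel)
      finally have "emeasure \<nu> K \<le> emeasure \<nu> (interior K)" by simp
      moreover have "emeasure \<nu> (interior K) \<le> emeasure \<nu> K"
        using cd by (intro emeasure_mono) auto
      ultimately have eq: "emeasure \<nu> K = emeasure \<nu> (interior K)" by simp
      have "emeasure lebesgue (cball (g (Inf K)) (enn2real (emeasure \<nu> K))) = ennreal (2 * enn2real (emeasure \<nu> K))"
        by (simp add: cball_eq_atLeastAtMost)
      also have "\<dots> = 2 * emeasure \<nu> K"
        using \<nu>fin[OF Ksets[OF K]] by (simp add: ennreal_mult ennreal_enn2real_if)
      finally show "emeasure lebesgue (cball (g (Inf K)) (enn2real (emeasure \<nu> K))) = 2 * emeasure \<nu> (interior K)"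
        using eq by simp
    qed
    also have "\<dots> = 2 * (\<integral>\<^sup>+K. emeasure \<nu> (interior K) \<partial>count_space (D k))"
      by (rule nn_integral_cmult) simp
    also have "(\<integral>\<^sup>+K. emeasure \<nu> (interior K) \<partial>count_space (D k)) = emeasure \<nu> (\<Union>(interior ` D k))"
      using Dpw[of k] Dc[of k]
      by (intro emeasure_UN_countable[symmetric])
         (auto simp: disjoint_family_on_def pairwise_def)
    also have "emeasure \<nu> (\<Union>(interior ` D k)) \<le> emeasure \<nu> (V k)"
    proof (rule emeasure_mono)
      show "\<Union>(interior ` D k) \<subseteq> V k" using UV[of k] interior_subset unfolding U_def by blast
    qed (use Vsets in simp)
    finally show ?thesis by (simp add: mult_left_mono)
  qed
  have "emeasure lebesgue (\<Inter>k. C k) \<le> 0"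
  proof -
    have "emeasure lebesgue (\<Inter>k. C k) \<le> 2 * emeasure \<nu> (V k)" for k
      using emeasure_mono[of "\<Inter>k. C k" "C k" lebesgue] Csets Cmeas[of k] by (meson INT_lower UNIV_I order_trans)
    note IC = this
    show ?thesis
    proof (rule ennreal_le_epsilon)
      fix e :: real assume e: "0 < e"
      have "(INF k. emeasure \<nu> (V k)) < ennreal (e/2)" using INF\<nu> e by simp
      then obtain k where k: "emeasure \<nu> (V k) < ennreal (e/2)" by (auto simp: INF_less_iff)
      have "2 * emeasure \<nu> (V k) \<le> 2 * ennreal (e/2)"
        using k by (intro mult_left_mono) auto
      also have "\<dots> = 0 + ennreal e"
      proof -
        have "2 * ennreal (e/2) = ennreal (2 * (e/2))" using e by (subst ennreal_mult) auto
        then show ?thesis by simp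
      qed
      finally show "emeasure lebesgue (\<Inter>k. C k) \<le> 0 + ennreal e"
        using IC[of k] by (rule order_trans[rotated])
    qed
  qed
  then have "(\<Inter>k. C k) \<in> null_sets lebesgue"
    using Csets by (auto simp: null_sets_def)
  moreover have "g ` N \<subseteq> (\<Inter>k. C k)" using gNC by blast
  ultimately show ?thesis by (rule null_sets_completion_subset[rotated])
qed

lemma ftc_ineq:
  fixes g g' \<rho> :: "real \<Rightarrow> real"
  assumes ab: "a \<le> b" and cont: "continuous_on UNIV g"
    and \<rho>0: "\<And>x. 0 \<le> \<rho> x" and \<rho>m: "\<rho> \<in> borel_measurable lebesgue"
    and \<rho>fin: "(\<integral>\<^sup>+x. ennreal (\<rho> x) \<partial>lebesgue) < \<infinity>"
    and bd: "\<And>x y. x \<le> y \<Longrightarrow> ennreal \<bar>g y - g x\<bar> \<le> (\<integral>\<^sup>+t\<in>{x..y}. ennreal (\<rho> t) \<partial>lebesgue)"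
    and N: "N \<in> null_sets lebesgue"
    and der: "\<And>s. s \<in> {a..b} - N \<Longrightarrow> (g has_real_derivative g' s) (at s)"
  shows "ennreal (g a - g b) \<le> (\<integral>\<^sup>+s\<in>{a..b}. ennreal \<bar>g' s\<bar> \<partial>lebesgue)"
proof -
  define S where "S = {a..b} - N"
  have Ssets: "S \<in> sets lebesgue" using N unfolding S_def by auto
  define \<phi> where "\<phi> s = indicator S s * \<bar>g' s\<bar>" for s
  have gm: "(\<lambda>s. g (s + c)) \<in> borel_measurable lebesgue" for c
  proof -
    have "continuous_on UNIV (\<lambda>s. g (s + c))"
      by (rule continuous_on_compose2[OF cont]) (auto intro!: continuous_intros)
    then show ?thesis
      by (intro measurable_completion) (simp add: borel_measurable_continuous_onI)
  qed
  have \<phi>m: "\<phi> \<in> borel_measurable lebesgue"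
  proof (rule borel_measurable_LIMSEQ_real)
    fix s
    show "(\<lambda>n. indicator S s * \<bar>(g (s + inverse (real (Suc n))) - g s) / inverse (real (Suc n))\<bar>) \<longlonglongrightarrow> \<phi> s"
    proof (cases "s \<in> S")
      case True
      then have D: "(g has_real_derivative g' s) (at s)" using der by (simp add: S_def)
      have h: "filterlim (\<lambda>n. inverse (real (Suc n))) (at 0) sequentially"
        using LIMSEQ_inverse_real_of_nat by (auto simp: filterlim_at)
      have "(\<lambda>n. (g (s + inverse (real (Suc n))) - g s) / inverse (real (Suc n))) \<longlonglongrightarrow> g' s"
        using filterlim_compose[OF DERIV_D[OF D] h] by simp
      from tendsto_rabs[OF this] show ?thesis using True by (simp add: \<phi>_def)
    qed (simp add: \<phi>_def)
  next
    fix n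
    show "(\<lambda>s. indicator S s * \<bar>(g (s + inverse (real (Suc n))) - g s) / inverse (real (Suc n))\<bar>) \<in> borel_measurable lebesgue"
    proof -
      have g0: "g \<in> borel_measurable lebesgue" using gm[of 0] by simp
      show ?thesis
        using gm[of "inverse (real (Suc n))"] g0 Ssets
        by (intro borel_measurable_times borel_measurable_abs borel_measurable_divide borel_measurable_diff
             borel_measurable_indicator) auto
    qed
  qed
  have \<phi>0: "\<And>s. 0 \<le> \<phi> s" by (simp add: \<phi>_def)
  have RHS: "(\<integral>\<^sup>+s. ennreal (\<phi> s) \<partial>lebesgue) \<le> (\<integral>\<^sup>+s\<in>{a..b}. ennreal \<bar>g' s\<bar> \<partial>lebesgue)"
    by (intro nn_integral_mono) (auto simp: \<phi>_def S_def split: split_indicator)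
  show ?thesis
  proof (cases "(\<integral>\<^sup>+s. ennreal (\<phi> s) \<partial>lebesgue) < top")
    case False
    then have "(\<integral>\<^sup>+s. ennreal (\<phi> s) \<partial>lebesgue) = top" by (simp add: less_top[symmetric])
    then show ?thesis using RHS by (simp add: top_unique)
  next
    case True
    have int: "integrable lebesgue \<phi>" using \<phi>m \<phi>0 True by (intro integrableI_nonneg) (auto simp: infinity_ennreal_def)
    have eqN: "(\<integral>\<^sup>+s. ennreal (\<phi> s) \<partial>lebesgue) = ennreal (integral UNIV \<phi>)"
      using int \<phi>0 by (simp add: nn_integral_eq_integral integral_lebesgue)
    have \<phi>if: "\<phi> = (\<lambda>x. if x \<in> S then \<bar>g' x\<bar> else 0)" by (auto simp: \<phi>_def fun_eq_iff)
    have intS: "(\<lambda>x. \<bar>g' x\<bar>) integrable_on S"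
      using integrable_on_lebesgue[OF int] unfolding \<phi>if integrable_restrict_UNIV .
    have iS: "integral UNIV \<phi> = integral S (\<lambda>x. \<bar>g' x\<bar>)"
      unfolding \<phi>if integral_restrict_UNIV ..
    have derS: "\<And>x. x \<in> S \<Longrightarrow> (g has_real_derivative g' x) (at x within S)"
      using der by (auto simp: S_def intro: has_field_derivative_at_within)
    note img = measure_diff_image_real[OF Ssets derS intS]
    have Z: "g ` (N \<inter> {a..b}) \<in> null_sets lebesgue"
      using N by (intro lusinN[OF \<rho>0 \<rho>m \<rho>fin bd, of _ a b]) (auto intro: null_sets_completion_subset)
    show ?thesis
    proof (cases "g b \<le> g a")
      case False
      then have "ennreal (g a - g b) = 0" by (simp add: ennreal_eq_0_iff)
      then show ?thesis by simp
    next
      case True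
      have sub: "{g b..g a} \<subseteq> g ` S \<union> g ` (N \<inter> {a..b})"
      proof
        fix y assume y: "y \<in> {g b..g a}"
        then obtain x where "a \<le> x" "x \<le> b" "g x = y"
          using IVT2'[of g b y a] ab continuous_on_subset[OF cont] by auto
        then show "y \<in> g ` S \<union> g ` (N \<inter> {a..b})" unfolding S_def by auto
      qed
      have "ennreal (g a - g b) = emeasure lebesgue {g b..g a}" using True by simp
      also have "\<dots> \<le> emeasure lebesgue (g ` S \<union> g ` (N \<inter> {a..b}))"
        using img Z sub by (intro emeasure_mono) auto
      also have "\<dots> \<le> emeasure lebesgue (g ` S) + emeasure lebesgue (g ` (N \<inter> {a..b}))"
        using img Z by (intro emeasure_subadditive) auto
      also have "\<dots> = ennreal (measure lebesgue (g ` S))"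
        using img Z by (simp add: emeasure_eq_measure2 null_setsD1)
      also have "\<dots> \<le> ennreal (integral S (\<lambda>x. \<bar>g' x\<bar>))"
        using img by (simp add: ennreal_leI)
      also have "\<dots> = (\<integral>\<^sup>+s. ennreal (\<phi> s) \<partial>lebesgue)" using eqN iS by simp
      also have "\<dots> \<le> (\<integral>\<^sup>+s\<in>{a..b}. ennreal \<bar>g' s\<bar> \<partial>lebesgue)" by (rule RHS)
      finally show ?thesis .
    qed
  qed
qed

lemma tail_split:
  assumes m: "\<gamma> \<in> borel_measurable lebesgue" and "x \<le> y"
  shows "tailP \<gamma> x = (\<integral>\<^sup>+s\<in>{x..<y}. ennreal (\<gamma> s) \<partial>lebesgue) + tailP \<gamma> y"
proof -
  have "tailP \<gamma> x = (\<integral>\<^sup>+s. ennreal (\<gamma> s) * indicator {x..<y} s + ennreal (\<gamma> s) * indicator {y..} s \<partial>lebesgue)"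
    unfolding tailP_def using \<open>x \<le> y\<close>
    by (intro nn_integral_cong) (auto split: split_indicator)
  also have "\<dots> = (\<integral>\<^sup>+s\<in>{x..<y}. ennreal (\<gamma> s) \<partial>lebesgue) + tailP \<gamma> y"
  proof -
    have [measurable]: "{x..<y} \<in> sets lebesgue" "{y..} \<in> sets lebesgue" "\<gamma> \<in> borel_measurable lebesgue"
      using m by auto
    show ?thesis unfolding tailP_def by (intro nn_integral_add) measurable
  qed
  finally show ?thesis .
qed

lemma tail_le1:
  assumes "admissible_gamma \<gamma>"
  shows "tailP \<gamma> t \<le> 1"
proof -
  have "tailP \<gamma> t \<le> (\<integral>\<^sup>+s. ennreal (\<gamma> s) \<partial>lebesgue)"
    unfolding tailP_def by (intro nn_integral_mono) (auto split: split_indicator)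
  then show ?thesis using assms by (simp add: admissible_gamma_def)
qed

lemma tail_fin: "admissible_gamma \<gamma> \<Longrightarrow> tailP \<gamma> t < top"
  using tail_le1[of \<gamma> t] by (metis ennreal_one_less_top le_less_trans)

lemma tail_lim:
  assumes a: "admissible_gamma \<gamma>" and e: "0 < e"
  shows "\<exists>b. \<forall>t\<ge>b. tailP \<gamma> t < ennreal e"
proof -
  have m: "\<gamma> \<in> borel_measurable lebesgue" and tot: "(\<integral>\<^sup>+s. ennreal (\<gamma> s) \<partial>lebesgue) = 1"
    using a by (auto simp: admissible_gamma_def)
  define \<nu> where "\<nu> = density lebesgue (\<lambda>x. ennreal (\<gamma> x))"
  have \<nu>A: "emeasure \<nu> A = (\<integral>\<^sup>+t\<in>A. ennreal (\<gamma> t) \<partial>lebesgue)" if "A \<in> sets lebesgue" for A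
    using that m by (simp add: \<nu>_def emeasure_density)
  have "(INF n. emeasure \<nu> {real n..}) = emeasure \<nu> (\<Inter>n. {real n..})"
  proof (rule INF_emeasure_decseq)
    show "range (\<lambda>n. {real n..}) \<subseteq> sets \<nu>" by (auto simp: \<nu>_def)
    show "decseq (\<lambda>n. {real n..})" by (auto simp: decseq_def)
    show "emeasure \<nu> {real n..} \<noteq> \<infinity>" for n
      using tail_fin[OF a, of "real n"] by (simp add: \<nu>A tailP_def)
  qed
  also have "(\<Inter>n. {real n..}) = {}"
  proof -
    have "x \<notin> (\<Inter>n. {real n..})" for x :: real
      using reals_Archimedean2[of x] by (auto simp: not_le)
    then show ?thesis by blast
  qed
  finally have "(INF n. emeasure \<nu> {real n..}) < ennreal e" using e by simp
  then obtain n where n: "emeasure \<nu> {real n..} < ennreal e" by (auto simp: INF_less_iff)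
  show ?thesis
  proof (intro exI allI impI)
    fix t assume "real n \<le> t"
    then have "tailP \<gamma> t \<le> tailP \<gamma> (real n)"
      unfolding tailP_def by (intro nn_integral_mono) (auto split: split_indicator)
    also have "\<dots> = emeasure \<nu> {real n..}" by (simp add: \<nu>A tailP_def)
    finally show "tailP \<gamma> t < ennreal e" using n by (rule le_less_trans)
  qed
qed

lemma cont_from_bd:
  fixes g \<rho> :: "real \<Rightarrow> real"
  assumes \<rho>0: "\<And>x. 0 \<le> \<rho> x" and \<rho>m: "\<rho> \<in> borel_measurable lebesgue"
    and \<rho>fin: "(\<integral>\<^sup>+x. ennreal (\<rho> x) \<partial>lebesgue) < top"
    and bd: "\<And>x y. x \<le> y \<Longrightarrow> ennreal \<bar>g y - g x\<bar> \<le> (\<integral>\<^sup>+t\<in>{x..y}. ennreal (\<rho> t) \<partial>lebesgue)"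
  shows "continuous_on UNIV g"
proof -
  define \<nu> where "\<nu> = density lebesgue (\<lambda>x. ennreal (\<rho> x))"
  have \<nu>A: "emeasure \<nu> A = (\<integral>\<^sup>+t\<in>A. ennreal (\<rho> t) \<partial>lebesgue)" if "A \<in> sets lebesgue" for A
    using that \<rho>m by (simp add: \<nu>_def emeasure_density)
  have \<nu>fin: "emeasure \<nu> A < top" if "A \<in> sets lebesgue" for A
  proof -
    have "emeasure \<nu> A \<le> (\<integral>\<^sup>+x. ennreal (\<rho> x) \<partial>lebesgue)"
      unfolding \<nu>A[OF that] by (intro nn_integral_mono) (auto split: split_indicator)
    then show ?thesis using \<rho>fin by (simp add: le_less_trans)
  qed
  have "isCont g x" for x
  proof (rule continuous_at_eps_delta[THEN iffD2], intro allI impI)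
    fix e :: real assume e: "0 < e"
    define B where "B n = cball x (inverse (real (Suc n)))" for n
    have "(INF n. emeasure \<nu> (B n)) = emeasure \<nu> (\<Inter>n. B n)"
    proof (rule INF_emeasure_decseq)
      show "range B \<subseteq> sets \<nu>" by (auto simp: \<nu>_def B_def)
      show "decseq B" unfolding decseq_def B_def
      proof (intro allI impI subsetI)
        fix m n :: nat and y assume mn: "m \<le> n" and y: "y \<in> cball x (inverse (real (Suc n)))"
        have "inverse (real (Suc n)) \<le> inverse (real (Suc m))"
          using mn by (intro le_imp_inverse_le) auto
        then show "y \<in> cball x (inverse (real (Suc m)))"
          using y order_trans[of "dist x y" "inverse (real (Suc n))" "inverse (real (Suc m))"]
          by (simp only: mem_cball)
      qed
      show "emeasure \<nu> (B n) \<noteq> \<infinity>" for n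
        using \<nu>fin[of "B n"] by (auto simp: B_def)
    qed
    also have "emeasure \<nu> (\<Inter>n. B n) \<le> emeasure \<nu> {x}"
    proof (rule emeasure_mono)
      show "(\<Inter>n. B n) \<subseteq> {x}"
      proof
        fix y assume y: "y \<in> (\<Inter>n. B n)"
        have "dist x y \<le> 0"
        proof (rule field_le_epsilon)
          fix d :: real assume d: "0 < d"
          obtain n where "inverse (real (Suc n)) < d" using reals_Archimedean d by blast
          moreover have "dist x y \<le> inverse (real (Suc n))" using y by (auto simp: B_def)
          ultimately show "dist x y \<le> 0 + d" by simp
        qed
        then show "y \<in> {x}" by simp
      qed
    qed (simp add: \<nu>_def)
    also have "emeasure \<nu> {x} = 0"
      by (simp add: \<nu>A nn_integral_null_set)
    finally have "(INF n. emeasure \<nu> (B n)) < ennreal e" using e by simp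
    then obtain n where n: "emeasure \<nu> (B n) < ennreal e" by (auto simp: INF_less_iff)
    show "\<exists>d>0. \<forall>y. dist y x < d \<longrightarrow> dist (g y) (g x) < e"
    proof (intro exI conjI allI impI)
      show "0 < inverse (real (Suc n))" by simp
      fix y assume y: "dist y x < inverse (real (Suc n))"
      have sub: "{min x y..max x y} \<subseteq> B n" using y
        by (auto simp: B_def dist_real_def)
      have "ennreal \<bar>g y - g x\<bar> \<le> (\<integral>\<^sup>+t\<in>{min x y..max x y}. ennreal (\<rho> t) \<partial>lebesgue)"
        using bd[of "min x y" "max x y"] by (cases "x \<le> y") (auto simp: abs_minus_commute min_def max_def)
      also have "\<dots> = emeasure \<nu> {min x y..max x y}" by (simp add: \<nu>A)
      also have "\<dots> \<le> emeasure \<nu> (B n)" using sub by (intro emeasure_mono) (auto simp: \<nu>_def B_def)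
      finally have "ennreal \<bar>g y - g x\<bar> < ennreal e" using n by (rule le_less_trans)
      then show "dist (g y) (g x) < e" by (simp add: dist_real_def ennreal_less_iff)
    qed
  qed
  then show ?thesis by (simp add: continuous_on_eq_continuous_at)
qed

lemma deriv_antimono_nonpos:
  fixes f :: "real \<Rightarrow> real"
  assumes D: "(f has_real_derivative d) (at x)" and am: "\<And>y z. y \<le> z \<Longrightarrow> f z \<le> f y"
  shows "d \<le> 0"
proof -
  have h: "filterlim (\<lambda>n. inverse (real (Suc n))) (at 0) sequentially"
    using LIMSEQ_inverse_real_of_nat by (auto simp: filterlim_at)
  have L: "(\<lambda>n. (f (x + inverse (real (Suc n))) - f x) / inverse (real (Suc n))) \<longlonglongrightarrow> d"
    using filterlim_compose[OF DERIV_D[OF D] h] by simp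
  show ?thesis
  proof (rule LIMSEQ_le_const2[OF L], intro exI allI impI)
    fix n :: nat
    have "f (x + inverse (real (Suc n))) - f x \<le> 0" using am[of x "x + inverse (real (Suc n))"] by simp
    then show "(f (x + inverse (real (Suc n))) - f x) / inverse (real (Suc n)) \<le> 0"
      by (simp add: divide_nonpos_pos)
  qed
qed

lemma tails_dominated:
  fixes \<gamma>1 \<gamma>2 \<gamma> :: "real \<Rightarrow> real"
  assumes a1: "admissible_gamma \<gamma>1" and a2: "admissible_gamma \<gamma>2"
    and ae: "AE s in lebesgue. 0 \<le> s \<longrightarrow>
           ((\<lambda>t. max (enn2real (tailP \<gamma>1 t)) (enn2real (tailP \<gamma>2 t)))
              has_real_derivative (- \<gamma> s)) (at s)"
    and \<delta>: "0 \<le> \<delta>"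
  shows "tailP \<gamma>1 \<delta> \<le> tailP \<gamma> \<delta> \<and> tailP \<gamma>2 \<delta> \<le> tailP \<gamma> \<delta>"
proof -
  define M where "M = (\<lambda>t. max (enn2real (tailP \<gamma>1 t)) (enn2real (tailP \<gamma>2 t)))"
  define \<rho> where "\<rho> s = \<gamma>1 s + \<gamma>2 s" for s
  have m1: "\<gamma>1 \<in> borel_measurable lebesgue" and p1: "\<And>s. 0 \<le> \<gamma>1 s"
    and t1: "(\<integral>\<^sup>+s. ennreal (\<gamma>1 s) \<partial>lebesgue) = 1"
    using a1 by (auto simp: admissible_gamma_def)
  have m2: "\<gamma>2 \<in> borel_measurable lebesgue" and p2: "\<And>s. 0 \<le> \<gamma>2 s"
    and t2: "(\<integral>\<^sup>+s. ennreal (\<gamma>2 s) \<partial>lebesgue) = 1"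
    using a2 by (auto simp: admissible_gamma_def)
  have Teq: "tailP g t = ennreal (enn2real (tailP g t))" if "admissible_gamma g" for g t
    using tail_fin[OF that, of t] by (simp add: ennreal_enn2real_if less_top)
  have Tbd: "ennreal \<bar>enn2real (tailP g y) - enn2real (tailP g x)\<bar> \<le> (\<integral>\<^sup>+t\<in>{x..y}. ennreal (g t) \<partial>lebesgue)"
    and Tanti: "enn2real (tailP g y) \<le> enn2real (tailP g x)"
    if ag: "admissible_gamma g" and xy: "x \<le> y" for g x y
  proof -
    have mg: "g \<in> borel_measurable lebesgue" using ag by (simp add: admissible_gamma_def)
    define I where "I = (\<integral>\<^sup>+s\<in>{x..<y}. ennreal (g s) \<partial>lebesgue)"
    have sp: "tailP g x = I + tailP g y" unfolding I_def by (rule tail_split[OF mg xy])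
    have If: "I < top" using tail_fin[OF ag, of x] sp by (metis le_iff_add le_less_trans)
    have "enn2real (tailP g x) = enn2real I + enn2real (tailP g y)"
      using sp If tail_fin[OF ag, of y] by (simp add: enn2real_plus)
    then have d: "enn2real (tailP g x) - enn2real (tailP g y) = enn2real I" by simp
    then show "enn2real (tailP g y) \<le> enn2real (tailP g x)" using enn2real_nonneg[of I] by linarith
    have "ennreal \<bar>enn2real (tailP g y) - enn2real (tailP g x)\<bar> = I"
      using d If by (simp add: abs_minus_commute ennreal_enn2real_if less_top)
    also have "\<dots> \<le> (\<integral>\<^sup>+t\<in>{x..y}. ennreal (g t) \<partial>lebesgue)"
      unfolding I_def by (intro nn_integral_mono) (auto split: split_indicator)
    finally show "ennreal \<bar>enn2real (tailP g y) - enn2real (tailP g x)\<bar> \<le> (\<integral>\<^sup>+t\<in>{x..y}. ennreal (g t) \<partial>lebesgue)" .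
  qed
  have \<rho>0: "\<And>s. 0 \<le> \<rho> s" using p1 p2 by (simp add: \<rho>_def add_nonneg_nonneg)
  have \<rho>m: "\<rho> \<in> borel_measurable lebesgue" using m1 m2 unfolding \<rho>_def by measurable
  have \<rho>split: "(\<integral>\<^sup>+t\<in>A. ennreal (\<rho> t) \<partial>lebesgue)
      = (\<integral>\<^sup>+t\<in>A. ennreal (\<gamma>1 t) \<partial>lebesgue) + (\<integral>\<^sup>+t\<in>A. ennreal (\<gamma>2 t) \<partial>lebesgue)"
    if "A \<in> sets lebesgue" for A
  proof -
    have "(\<integral>\<^sup>+t\<in>A. ennreal (\<rho> t) \<partial>lebesgue)
        = (\<integral>\<^sup>+t. ennreal (\<gamma>1 t) * indicator A t + ennreal (\<gamma>2 t) * indicator A t \<partial>lebesgue)"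
      using p1 p2 by (intro nn_integral_cong) (simp add: \<rho>_def ennreal_plus distrib_right)
    also have "\<dots> = (\<integral>\<^sup>+t\<in>A. ennreal (\<gamma>1 t) \<partial>lebesgue) + (\<integral>\<^sup>+t\<in>A. ennreal (\<gamma>2 t) \<partial>lebesgue)"
      using m1 m2 that by (intro nn_integral_add) auto
    finally show ?thesis .
  qed
  have \<rho>fin: "(\<integral>\<^sup>+x. ennreal (\<rho> x) \<partial>lebesgue) < top"
    using \<rho>split[of UNIV] t1 t2 by simp
  have \<rho>fin': "(\<integral>\<^sup>+x. ennreal (\<rho> x) \<partial>lebesgue) < \<infinity>"
    using \<rho>fin by (simp add: infinity_ennreal_def)
  have bd: "ennreal \<bar>M y - M x\<bar> \<le> (\<integral>\<^sup>+t\<in>{x..y}. ennreal (\<rho> t) \<partial>lebesgue)" if xy: "x \<le> y" for x y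
  proof -
    let ?d1 = "\<bar>enn2real (tailP \<gamma>1 y) - enn2real (tailP \<gamma>1 x)\<bar>"
    let ?d2 = "\<bar>enn2real (tailP \<gamma>2 y) - enn2real (tailP \<gamma>2 x)\<bar>"
    have "\<bar>M y - M x\<bar> \<le> ?d1 + ?d2" unfolding M_def by (simp add: max_def abs_if) 
    then have "ennreal \<bar>M y - M x\<bar> \<le> ennreal (?d1 + ?d2)" by (rule ennreal_leI)
    also have "\<dots> = ennreal ?d1 + ennreal ?d2" by (simp add: ennreal_plus)
    also have "\<dots> \<le> (\<integral>\<^sup>+t\<in>{x..y}. ennreal (\<gamma>1 t) \<partial>lebesgue) + (\<integral>\<^sup>+t\<in>{x..y}. ennreal (\<gamma>2 t) \<partial>lebesgue)"
      by (intro add_mono Tbd a1 a2 xy)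
    also have "\<dots> = (\<integral>\<^sup>+t\<in>{x..y}. ennreal (\<rho> t) \<partial>lebesgue)" by (simp add: \<rho>split)
    finally show ?thesis .
  qed
  have cont: "continuous_on UNIV M" by (rule cont_from_bd[OF \<rho>0 \<rho>m \<rho>fin bd])
  have Manti: "M z \<le> M y" if "y \<le> z" for y z
    unfolding M_def by (rule max.mono[OF Tanti[OF a1 that] Tanti[OF a2 that]])
  have M0: "0 \<le> M t" for t unfolding M_def by (simp add: max_def)
  obtain N where N: "N \<in> null_sets lebesgue"
    and NP: "\<And>s. s \<notin> N \<Longrightarrow> 0 \<le> s \<Longrightarrow> (M has_real_derivative (- \<gamma> s)) (at s)"
    using ae unfolding M_def[symmetric] by (rule AE_E3) auto
  have \<gamma>pos: "0 \<le> \<gamma> s" if "s \<notin> N" "0 \<le> s" for s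
    using deriv_antimono_nonpos[OF NP[OF that] Manti] by simp
  have key: "ennreal (M \<delta>) \<le> tailP \<gamma> \<delta>"
  proof (rule ennreal_le_epsilon)
    fix e :: real assume e: "0 < e"
    obtain b1 where b1: "\<And>t. t \<ge> b1 \<Longrightarrow> tailP \<gamma>1 t < ennreal e" using tail_lim[OF a1 e] by blast
    obtain b2 where b2: "\<And>t. t \<ge> b2 \<Longrightarrow> tailP \<gamma>2 t < ennreal e" using tail_lim[OF a2 e] by blast
    define b where "b = max \<delta> (max b1 b2)"
have "enn2real (tailP \<gamma>1 b) < e"
    proof -
      have "tailP \<gamma>1 b < ennreal e" using b1 by (simp add: b_def)
      then have "ennreal (enn2real (tailP \<gamma>1 b)) < ennreal e" using Teq[OF a1, of b] by simp
      then show ?thesis by (simp add: ennreal_less_iff)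
    qed
    moreover have "enn2real (tailP \<gamma>2 b) < e"
    proof -
      have "tailP \<gamma>2 b < ennreal e" using b2 by (simp add: b_def)
      then have "ennreal (enn2real (tailP \<gamma>2 b)) < ennreal e" using Teq[OF a2, of b] by simp
      then show ?thesis by (simp add: ennreal_less_iff)
    qed
    ultimately have Mb: "M b < e" unfolding M_def by simp
    have \<delta>b: "\<delta> \<le> b" by (simp add: b_def)
    have "ennreal (M \<delta> - M b) \<le> (\<integral>\<^sup>+s\<in>{\<delta>..b}. ennreal \<bar>- \<gamma> s\<bar> \<partial>lebesgue)"
      by (rule ftc_ineq[OF \<delta>b cont \<rho>0 \<rho>m \<rho>fin' bd N]) (use NP \<delta> in auto)
    also have "\<dots> \<le> tailP \<gamma> \<delta>"
      unfolding tailP_def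
    proof (rule nn_integral_mono_AE)
      show "AE s in lebesgue. ennreal \<bar>- \<gamma> s\<bar> * indicator {\<delta>..b} s \<le> ennreal (\<gamma> s) * indicator {\<delta>..} s"
      proof (rule AE_I'[OF N], safe)
        fix s assume "\<not> ennreal \<bar>- \<gamma> s\<bar> * indicator {\<delta>..b} s \<le> ennreal (\<gamma> s) * indicator {\<delta>..} s"
        moreover have "s \<notin> N \<Longrightarrow> ennreal \<bar>- \<gamma> s\<bar> * indicator {\<delta>..b} s \<le> ennreal (\<gamma> s) * indicator {\<delta>..} s"
          using \<gamma>pos[of s] \<delta> by (auto split: split_indicator)
        ultimately show "s \<in> N" by blast
      qed
    qed
    finally have I1: "ennreal (M \<delta> - M b) \<le> tailP \<gamma> \<delta>" .
    have "ennreal (M \<delta>) = ennreal (M \<delta> - M b) + ennreal (M b)"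
      using Manti[OF \<delta>b] M0[of b] by (subst ennreal_plus[symmetric]) auto
    also have "\<dots> \<le> tailP \<gamma> \<delta> + ennreal e"
      using I1 Mb by (intro add_mono ennreal_leI) auto
    finally show "ennreal (M \<delta>) \<le> tailP \<gamma> \<delta> + ennreal e" .
  qed
  have "tailP \<gamma>1 \<delta> \<le> ennreal (M \<delta>)"
    using Teq[OF a1, of \<delta>] by (metis M_def ennreal_leI max.cobounded1)
  moreover have "tailP \<gamma>2 \<delta> \<le> ennreal (M \<delta>)"
    using Teq[OF a2, of \<delta>] by (metis M_def ennreal_leI max.cobounded2)
  ultimately show ?thesis using key by (meson order_trans)
qed

lemma convex_part:
  fixes I :: "'b set" and w :: "'b \<Rightarrow> real" and q :: "'b \<Rightarrow> 'a::euclidean_space \<Rightarrow> real"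
  assumes fin: "finite I" and w0: "\<forall>i\<in>I. 0 \<le> w i" and w1: "(\<Sum>i\<in>I. w i) = 1"
    and qs: "\<forall>i\<in>I. q i \<in> subspherical \<gamma>0"
  shows "(\<lambda>x. \<Sum>i\<in>I. w i * q i x) \<in> subspherical \<gamma>0"
proof -
  have q0: "\<And>i x. i \<in> I \<Longrightarrow> 0 \<le> q i x" and qm: "\<And>i. i \<in> I \<Longrightarrow> q i \<in> borel_measurable lebesgue"
    and q1: "\<And>i. i \<in> I \<Longrightarrow> (\<integral>\<^sup>+ x. ennreal (q i x) \<partial>lebesgue) = 1"
    and qe: "\<And>i x. i \<in> I \<Longrightarrow> q i (- x) = q i x"
    and qt: "\<And>i e \<delta>. i \<in> I \<Longrightarrow> norm e = 1 \<Longrightarrow> 0 \<le> \<delta> \<Longrightarrow>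
         (\<integral>\<^sup>+ \<xi> \<in> {\<xi>. \<delta> \<le> e \<bullet> \<xi>}. ennreal (q i \<xi>) \<partial>lebesgue) \<le> tailP \<gamma>0 \<delta>"
    using qs by (auto simp: subspherical_def prob_density_def)
  have split: "(\<integral>\<^sup>+ x. ennreal (\<Sum>i\<in>I. w i * q i x) * indicator A x \<partial>lebesgue)
      = (\<Sum>i\<in>I. ennreal (w i) * (\<integral>\<^sup>+ x. ennreal (q i x) * indicator A x \<partial>lebesgue))"
    if A: "A \<in> sets lebesgue" for A :: "'a set"
  proof -
    have "(\<integral>\<^sup>+ x. ennreal (\<Sum>i\<in>I. w i * q i x) * indicator A x \<partial>lebesgue)
        = (\<integral>\<^sup>+ x. (\<Sum>i\<in>I. ennreal (w i) * (ennreal (q i x) * indicator A x)) \<partial>lebesgue)"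
    proof (rule nn_integral_cong)
      fix x
      have "ennreal (\<Sum>i\<in>I. w i * q i x) = (\<Sum>i\<in>I. ennreal (w i * q i x))"
        using w0 q0 by (subst sum_ennreal) auto
      also have "\<dots> = (\<Sum>i\<in>I. ennreal (w i) * ennreal (q i x))"
        using w0 q0 by (intro sum.cong refl) (simp add: ennreal_mult)
      finally show "ennreal (\<Sum>i\<in>I. w i * q i x) * indicator A x = (\<Sum>i\<in>I. ennreal (w i) * (ennreal (q i x) * indicator A x))"
        by (simp add: sum_distrib_right mult.assoc)
    qed
    also have "\<dots> = (\<Sum>i\<in>I. (\<integral>\<^sup>+ x. ennreal (w i) * (ennreal (q i x) * indicator A x) \<partial>lebesgue))"
      by (rule nn_integral_sum) (use qm A in auto)
    also have "\<dots> = (\<Sum>i\<in>I. ennreal (w i) * (\<integral>\<^sup>+ x. ennreal (q i x) * indicator A x \<partial>lebesgue))"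
      by (rule sum.cong) (use qm A in \<open>auto intro!: nn_integral_cmult\<close>)
    finally show ?thesis .
  qed
  have "(\<integral>\<^sup>+ x. ennreal (\<Sum>i\<in>I. w i * q i x) \<partial>lebesgue)
       = (\<integral>\<^sup>+ x. ennreal (\<Sum>i\<in>I. w i * q i x) * indicator UNIV x \<partial>lebesgue)" by simp
  also have "\<dots> = (\<Sum>i\<in>I. ennreal (w i))"
    using split[of UNIV] q1 by simp
  also have "\<dots> = 1" using w0 w1 by (simp add: sum_ennreal)
  finally have tot: "(\<integral>\<^sup>+ x. ennreal (\<Sum>i\<in>I. w i * q i x) \<partial>lebesgue) = 1" .
  have tail: "(\<integral>\<^sup>+ \<xi> \<in> {\<xi>. \<delta> \<le> e \<bullet> \<xi>}. ennreal (\<Sum>i\<in>I. w i * q i \<xi>) \<partial>lebesgue) \<le> tailP \<gamma>0 \<delta>"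
    if "norm e = 1" "0 \<le> \<delta>" for e :: 'a and \<delta>
  proof -
    have H: "{\<xi>. \<delta> \<le> e \<bullet> \<xi>} \<in> sets lebesgue"
      using closed_halfspace_ge[of \<delta> e] by (intro sets_completionI_sets) (simp add: borel_closed)
    have "(\<integral>\<^sup>+ \<xi> \<in> {\<xi>. \<delta> \<le> e \<bullet> \<xi>}. ennreal (\<Sum>i\<in>I. w i * q i \<xi>) \<partial>lebesgue)
        = (\<Sum>i\<in>I. ennreal (w i) * (\<integral>\<^sup>+ \<xi> \<in> {\<xi>. \<delta> \<le> e \<bullet> \<xi>}. ennreal (q i \<xi>) \<partial>lebesgue))"
      by (rule split[OF H])
    also have "\<dots> \<le> (\<Sum>i\<in>I. ennreal (w i) * tailP \<gamma>0 \<delta>)"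
      by (intro sum_mono mult_left_mono qt that) auto
    also have "\<dots> = ennreal (\<Sum>i\<in>I. w i) * tailP \<gamma>0 \<delta>"
      using w0 by (simp add: sum_distrib_right[symmetric])
    finally show ?thesis using w1 by simp
  qed
  show ?thesis
    unfolding subspherical_def prob_density_def
    using tot tail q0 w0 qe qm by (auto intro!: sum_nonneg borel_measurable_sum borel_measurable_times)
qed

theorem proposition2p3:
  fixes \<gamma>0 \<gamma>1 \<gamma>2 \<gamma> :: "real \<Rightarrow> real"
    and I :: "'b set" and w :: "'b \<Rightarrow> real" and q :: "'b \<Rightarrow> real ^ 'n \<Rightarrow> real"
  assumes "admissible_gamma \<gamma>0"
    and "admissible_gamma \<gamma>1" and "admissible_gamma \<gamma>2"
    and "\<forall>s. \<gamma> (- s) = \<gamma> s"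
    and "AE s in lebesgue. 0 \<le> s \<longrightarrow>
           ((\<lambda>t. max (enn2real (tailP \<gamma>1 t)) (enn2real (tailP \<gamma>2 t)))
              has_real_derivative (- \<gamma> s)) (at s)"
  shows "(finite I \<and> I \<noteq> {} \<and> (\<forall>i\<in>I. 0 \<le> w i) \<and> (\<Sum>i\<in>I. w i) = 1 \<and>
            (\<forall>i\<in>I. q i \<in> subspherical \<gamma>0)
           \<longrightarrow> (\<lambda>x. \<Sum>i\<in>I. w i * q i x) \<in> subspherical \<gamma>0)
       \<and> (subspherical \<gamma>1 \<union> subspherical \<gamma>2 \<subseteq> (subspherical \<gamma> :: (real ^ 'n \<Rightarrow> real) set))"
proof (intro conjI impI)
  assume "finite I \<and> I \<noteq> {} \<and> (\<forall>i\<in>I. 0 \<le> w i) \<and> (\<Sum>i\<in>I. w i) = 1 \<and>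
            (\<forall>i\<in>I. q i \<in> subspherical \<gamma>0)"
  then show "(\<lambda>x. \<Sum>i\<in>I. w i * q i x) \<in> subspherical \<gamma>0"
    using convex_part[of I w q \<gamma>0] by blast
next
  have td: "\<And>\<delta>. 0 \<le> \<delta> \<Longrightarrow> tailP \<gamma>1 \<delta> \<le> tailP \<gamma> \<delta> \<and> tailP \<gamma>2 \<delta> \<le> tailP \<gamma> \<delta>"
    using tails_dominated[OF assms(2,3,5)] by blast
  show "subspherical \<gamma>1 \<union> subspherical \<gamma>2 \<subseteq> (subspherical \<gamma> :: (real ^ 'n \<Rightarrow> real) set)"
  proof
    fix p :: "real ^ 'n \<Rightarrow> real"
    assume "p \<in> subspherical \<gamma>1 \<union> subspherical \<gamma>2"
    then show "p \<in> subspherical \<gamma>"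
      unfolding subspherical_def using td by (fastforce intro: order_trans)
  qed
qed

end
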